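(* Let $p$ be a prime. Let $G=P\times A$ and $H=P_1\times B$, where $P$ and $P_1$ are finite non-abelian $p$-groups and $A$, $B$ are non-trivial finite abelian groups of order coprime to $p$. Suppose that $\Gamma_G$ and $\Gamma_H$ are irregular and $\Gamma_G\cong\Gamma_H$. Then $|A|=|B|$ and $|P|=|P_1|$; in particular $|G|=|H|$.
   Context: For a non-abelian group $G$ with center $Z(G)$, the non-commuting graph $\Gamma_G$ is the simple graph with vertex set $G\setminus Z(G)$ in which two distinct vertices $x,y$ are adjacent if and only if $xy\neq yx$. A graph is regular if all its vertices have the same degree, and irregular otherwise. *)

theory Defs
  imports "HOL-Algebra.Algebra"
begin

definition grp_center :: "('a, 'b) monoid_scheme \<Rightarrow> 'a set" where
  "grp_center G = {z \<in> carrier G. \<forall>x \<in> carrier G. z \<otimes>\<^bsub>G\<^esub> x = x \<otimes>\<^bsub>G\<^esub> z}"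

definition nc_vertices :: "('a, 'b) monoid_scheme \<Rightarrow> 'a set" where
  "nc_vertices G = carrier G - grp_center G"

definition nc_adj :: "('a, 'b) monoid_scheme \<Rightarrow> 'a \<Rightarrow> 'a \<Rightarrow> bool" where
  "nc_adj G x y \<longleftrightarrow> x \<in> nc_vertices G \<and> y \<in> nc_vertices G \<and> x \<noteq> y
     \<and> x \<otimes>\<^bsub>G\<^esub> y \<noteq> y \<otimes>\<^bsub>G\<^esub> x"

definition nc_degree :: "('a, 'b) monoid_scheme \<Rightarrow> 'a \<Rightarrow> nat" where
  "nc_degree G x = card {y \<in> nc_vertices G. nc_adj G x y}"

definition nc_regular :: "('a, 'b) monoid_scheme \<Rightarrow> bool" where
  "nc_regular G \<longleftrightarrow> (\<forall>x \<in> nc_vertices G. \<forall>y \<in> nc_vertices G. nc_degree G x = nc_degree G y)"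

definition nc_irregular :: "('a, 'b) monoid_scheme \<Rightarrow> bool" where
  "nc_irregular G \<longleftrightarrow> \<not> nc_regular G"

definition nc_graph_iso :: "('a, 'b) monoid_scheme \<Rightarrow> ('c, 'd) monoid_scheme \<Rightarrow> bool" where
  "nc_graph_iso G H \<longleftrightarrow> (\<exists>f. bij_betw f (nc_vertices G) (nc_vertices H) \<and>
     (\<forall>x \<in> nc_vertices G. \<forall>y \<in> nc_vertices G. nc_adj G x y \<longleftrightarrow> nc_adj H (f x) (f y)))"

definition finite_p_group :: "nat \<Rightarrow> ('a, 'b) monoid_scheme \<Rightarrow> bool" where
  "finite_p_group p P \<longleftrightarrow> group P \<and> finite (carrier P) \<and> (\<exists>n. order P = p ^ n)"

end

theory Submission imports Defs begin

definition cent :: "('a, 'b) monoid_scheme \<Rightarrow> 'a \<Rightarrow> 'a set" where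
  "cent P x = {y \<in> carrier P. x \<otimes>\<^bsub>P\<^esub> y = y \<otimes>\<^bsub>P\<^esub> x}"

lemma cent_subgroup:
  fixes P (structure)
  assumes "group P" "x \<in> carrier P" shows "subgroup (cent P x) P"
proof -
  interpret group P by fact
  show ?thesis
  proof (rule subgroupI)
    show "cent P x \<subseteq> carrier P" by (auto simp: cent_def)
    show "cent P x \<noteq> {}" using assms(2) by (auto simp: cent_def)
  next
    fix a assume a: "a \<in> cent P x"
    hence ac: "a \<in> carrier P" and e: "x \<otimes> a = a \<otimes> x" by (auto simp: cent_def)
    have "inv a \<otimes> x = inv a \<otimes> x \<otimes> a \<otimes> inv a" using ac assms(2) by (simp add: m_assoc)
    also have "\<dots> = inv a \<otimes> (a \<otimes> x) \<otimes> inv a" using ac assms(2) e by (simp add: m_assoc)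
    also have "\<dots> = x \<otimes> inv a" using ac assms(2) by (simp add: m_assoc[symmetric])
    finally show "inv a \<in> cent P x" using ac by (auto simp: cent_def)
  next
    fix a b assume "a \<in> cent P x" "b \<in> cent P x"
    thus "a \<otimes> b \<in> cent P x" using assms(2)
      by (auto simp: cent_def) (metis m_assoc)
  qed
qed

lemma center_subgroup:
  fixes P (structure)
  assumes "group P" shows "subgroup (grp_center P) P"
proof -
  interpret group P by fact
  have eq: "grp_center P = carrier P \<inter> (\<Inter>x\<in>carrier P. cent P x)"
    by (auto simp: grp_center_def cent_def)
  show ?thesis
  proof (rule subgroupI)
    show "grp_center P \<subseteq> carrier P" by (auto simp: grp_center_def)
    show "grp_center P \<noteq> {}" using one_closed by (auto simp: grp_center_def)
  next
    fix a assume "a \<in> grp_center P"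
    thus "inv a \<in> grp_center P" unfolding eq
      using subgroup.m_inv_closed[OF cent_subgroup[OF assms]] by auto
  next
    fix a b assume "a \<in> grp_center P" "b \<in> grp_center P"
    thus "a \<otimes> b \<in> grp_center P" unfolding eq
      using subgroup.m_closed[OF cent_subgroup[OF assms]] by auto
  qed
qed

lemma ppow_card:
  assumes "Factorial_Ring.prime p" "finite_p_group p P" "subgroup H P"
  shows "\<exists>i. card H = p ^ i"
proof -
  from assms(2) obtain n where g: "group P" and n: "order P = p ^ n"
    by (auto simp: finite_p_group_def)
  have "card H dvd order P" using group.lagrange[OF g assms(3)] by (metis dvd_triv_right)
  thus ?thesis using n divides_primepow_nat[OF assms(1)] by auto
qed

lemma dp_center:
  assumes "group P" "comm_group A"
  shows "grp_center (P \<times>\<times> A) = grp_center P \<times> carrier A"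
proof -
  interpret P: group P by fact
  interpret A: comm_group A by fact
  show ?thesis
  proof safe
    fix z b assume h: "(z, b) \<in> grp_center (P \<times>\<times> A)"
    hence zb: "z \<in> carrier P" "b \<in> carrier A" by (auto simp: grp_center_def)
    { fix x assume "x \<in> carrier P"
      with h have "(z, b) \<otimes>\<^bsub>P \<times>\<times> A\<^esub> (x, \<one>\<^bsub>A\<^esub>) = (x, \<one>\<^bsub>A\<^esub>) \<otimes>\<^bsub>P \<times>\<times> A\<^esub> (z, b)"
        unfolding grp_center_def by auto
      hence "z \<otimes>\<^bsub>P\<^esub> x = x \<otimes>\<^bsub>P\<^esub> z" by simp }
    thus "z \<in> grp_center P" using zb by (auto simp: grp_center_def)
    show "b \<in> carrier A" by fact
  next
    fix z b assume "z \<in> grp_center P" "b \<in> carrier A"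
    thus "(z, b) \<in> grp_center (P \<times>\<times> A)"
      by (auto simp: grp_center_def A.m_comm)
  qed
qed

lemma dp_vertices:
  assumes "group P" "comm_group A"
  shows "nc_vertices (P \<times>\<times> A) = (carrier P - grp_center P) \<times> carrier A"
  using dp_center[OF assms] by (auto simp: nc_vertices_def)

lemma dp_adj:
  assumes "group P" "comm_group A" "x \<in> carrier P - grp_center P" "a \<in> carrier A"
  shows "{w \<in> nc_vertices (P \<times>\<times> A). nc_adj (P \<times>\<times> A) (x, a) w} = (carrier P - cent P x) \<times> carrier A"
proof -
  interpret A: comm_group A by fact
  show ?thesis using assms(3,4) unfolding nc_adj_def dp_vertices[OF assms(1,2)]
    by (auto simp: cent_def grp_center_def A.m_comm)
qed

lemma dp_nonadj:
  assumes "group P" "comm_group A" "x \<in> carrier P - grp_center P" "a \<in> carrier A"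
  shows "{w \<in> nc_vertices (P \<times>\<times> A). \<not> nc_adj (P \<times>\<times> A) (x, a) w} = (cent P x - grp_center P) \<times> carrier A"
proof -
  interpret A: comm_group A by fact
  show ?thesis using assms(3,4) unfolding nc_adj_def dp_vertices[OF assms(1,2)]
    by (auto simp: cent_def grp_center_def A.m_comm)
qed


lemma L1:
  fixes p :: nat
  assumes "Factorial_Ring.prime p" "coprime u p" "coprime u' p" "p ^ i * u = p ^ j * u'"
  shows "i = j \<and> u = u'"
proof -
  have p1: "p > 1" using assms(1) prime_gt_1_nat by blast
  have "i = j"
  proof (rule ccontr)
    assume "i \<noteq> j"
    then consider "i < j" | "j < i" by linarith
    thus False
    proof cases
      case 1
      have "p ^ j = p ^ i * p ^ (j - i)" using 1 by (simp add: power_add[symmetric])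
      hence "p ^ i * u = p ^ i * (p ^ (j - i) * u')" using assms(4) by (metis mult.assoc)
      hence "u = p ^ (j - i) * u'" using p1 by simp
      hence "p dvd u" using 1 by simp
      thus False using assms(2) p1
        using coprime_common_divisor[of _ p p] by fastforce
    next
      case 2
      have "p ^ i = p ^ j * p ^ (i - j)" using 2 by (simp add: power_add[symmetric])
      hence "p ^ j * u' = p ^ j * (p ^ (i - j) * u)" using assms(4) by (metis mult.assoc)
      hence "u' = p ^ (i - j) * u" using p1 by simp
      hence "p dvd u'" using 2 by simp
      thus False using assms(3) p1
        using coprime_common_divisor[of _ p p] by fastforce
    qed
  qed
  thus ?thesis using assms(4) p1 by simp
qed

lemma cop_pm1:
  fixes p :: nat
  assumes "Factorial_Ring.prime p" "k \<ge> 1"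
  shows "coprime (p ^ k - 1) p"
proof -
  have p1: "p > 1" using assms(1) prime_gt_1_nat by blast
  have "\<not> p dvd p ^ k - 1"
  proof
    assume "p dvd p ^ k - 1"
    moreover have "p dvd p ^ k" using assms(2) by (simp add: dvd_power)
    ultimately have "p dvd p ^ k - (p ^ k - 1)" by (rule dvd_diff_nat[rotated])
    moreover have "p ^ k \<ge> 1" using p1 by simp
    hence "p ^ k - (p ^ k - 1) = 1" by linarith
    ultimately show False using p1 by simp
  qed
  thus ?thesis using prime_imp_coprime[OF assms(1)] coprime_commute by blast
qed

lemma split_pow:
  fixes p :: nat
  assumes "z \<le> n"
  shows "m * (p ^ n - p ^ z) = p ^ z * (m * (p ^ (n - z) - 1))"
proof -
  have "p ^ n = p ^ z * p ^ (n - z)" using assms by (metis le_add_diff_inverse power_add)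
  moreover have "p ^ z * (p ^ (n - z) - 1) = p ^ z * p ^ (n - z) - p ^ z * 1"
    by (rule diff_mult_distrib2)
  ultimately have "p ^ n - p ^ z = p ^ z * (p ^ (n - z) - 1)" by (simp only: mult_1_right)
  thus ?thesis by (metis mult.left_commute)
qed

lemma L2:
  fixes p :: nat
  assumes pr: "Factorial_Ring.prime p" and cm: "coprime m p" "coprime m' p"
    and "z \<le> n" "z' \<le> n'" "z < n" "z' < n'"
    and eq: "m * (p ^ n - p ^ z) = m' * (p ^ n' - p ^ z')"
  shows "z = z' \<and> m * (p ^ (n - z) - 1) = m' * (p ^ (n' - z') - 1)"
proof -
  have "p ^ z * (m * (p ^ (n - z) - 1)) = p ^ z' * (m' * (p ^ (n' - z') - 1))"
    using eq split_pow[OF assms(4), of m p] split_pow[OF assms(5), of m' p] by simp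
  moreover have "coprime (m * (p ^ (n - z) - 1)) p" using cm(1) cop_pm1[OF pr, of "n - z"] assms(6) by simp
  moreover have "coprime (m' * (p ^ (n' - z') - 1)) p" using cm(2) cop_pm1[OF pr, of "n' - z'"] assms(7) by simp
  ultimately show ?thesis using L1[OF pr] by blast
qed

lemma arith:
  fixes p :: nat
  assumes pr: "Factorial_Ring.prime p" and cm: "coprime m p" "coprime m' p"
    and "z < c" "c < n" "z' < c'" "c' < n'"
    and e1: "m * (p ^ n - p ^ z) = m' * (p ^ n' - p ^ z')"
    and e2: "m * (p ^ n - p ^ c) = m' * (p ^ n' - p ^ c')"
    and e3: "m * (p ^ c - p ^ z) = m' * (p ^ c' - p ^ z')"
  shows "m = m' \<and> n = n'"
proof -
  have p1: "p > 1" using pr prime_gt_1_nat by blast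
  from L2[OF pr cm _ _ _ _ e1] assms(4-7) have z: "z = z'" and
    a: "m * (p ^ (n - z) - 1) = m' * (p ^ (n' - z') - 1)" by auto
  from L2[OF pr cm _ _ _ _ e2] assms(4-7) have c: "c = c'" by auto
  from L2[OF pr cm _ _ _ _ e3] assms(4-7) have
    b: "m * (p ^ (c - z) - 1) = m' * (p ^ (c' - z') - 1)" by auto
  have "p ^ (c - z) > 1" using p1 assms(4) one_less_power[of p "c - z"] by linarith
  hence "p ^ (c - z) - 1 > 0" by simp
  hence mm: "m = m'" using b z c by simp
  have m0: "m > 0" using cm(1) p1 by (cases "m = 0") auto
  have "p ^ (n - z) - 1 = p ^ (n' - z) - 1" using a mm z m0 by simp
  moreover have "p ^ (n - z) \<ge> 1" "p ^ (n' - z) \<ge> 1" using p1 by simp_all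
  ultimately have "p ^ (n - z) = p ^ (n' - z)" by linarith
  hence "n - z = n' - z" using p1 by (simp add: power_inject_exp)
  thus ?thesis using mm z assms(4-7) by simp
qed


lemma nonempty_V:
  assumes "finite_p_group p P" "\<not> comm_group P" "comm_group A"
  shows "\<exists>v. v \<in> nc_vertices (P \<times>\<times> A)"
proof -
  have g: "group P" using assms(1) by (simp add: finite_p_group_def)
  interpret A: comm_group A by fact
  have "\<exists>x \<in> carrier P. x \<notin> grp_center P"
  proof (rule ccontr)
    assume "\<not> ?thesis"
    hence "\<And>x y. x \<in> carrier P \<Longrightarrow> y \<in> carrier P \<Longrightarrow> x \<otimes>\<^bsub>P\<^esub> y = y \<otimes>\<^bsub>P\<^esub> x"
      by (auto simp: grp_center_def)
    hence "comm_group P" by (rule group.group_comm_groupI[OF g])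
    thus False using assms(2) by simp
  qed
  then obtain x where "x \<in> carrier P - grp_center P" by blast
  thus ?thesis using dp_vertices[OF g assms(3)] A.one_closed by blast
qed

lemma invariants:
  assumes pr: "Factorial_Ring.prime p" and fp: "finite_p_group p P" and A: "comm_group A"
    and fA: "finite (carrier A)" and v: "v \<in> nc_vertices (P \<times>\<times> A)"
  shows "\<exists>n z c. z < c \<and> c < n \<and> order P = p ^ n \<and>
    card (nc_vertices (P \<times>\<times> A)) = order A * (p ^ n - p ^ z) \<and>
    card {w \<in> nc_vertices (P \<times>\<times> A). nc_adj (P \<times>\<times> A) v w} = order A * (p ^ n - p ^ c) \<and>
    card {w \<in> nc_vertices (P \<times>\<times> A). \<not> nc_adj (P \<times>\<times> A) v w} = order A * (p ^ c - p ^ z)"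
proof -
  have p1: "p > 1" using pr prime_gt_1_nat by blast
  from fp obtain n where g: "group P" and fP: "finite (carrier P)" and n: "order P = p ^ n"
    by (auto simp: finite_p_group_def)
  obtain x a where va: "v = (x, a)" by (cases v)
  with v have x: "x \<in> carrier P - grp_center P" and a: "a \<in> carrier A"
    using dp_vertices[OF g A] by auto
  have ZC: "grp_center P \<subset> cent P x"
  proof
    show "grp_center P \<subseteq> cent P x" using x by (auto simp: grp_center_def cent_def)
    show "grp_center P \<noteq> cent P x" using x by (auto simp: cent_def)
  qed
  have CP: "cent P x \<subset> carrier P"
  proof
    show "cent P x \<subseteq> carrier P" by (auto simp: cent_def)
    from x obtain y where "y \<in> carrier P" "x \<otimes>\<^bsub>P\<^esub> y \<noteq> y \<otimes>\<^bsub>P\<^esub> x"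
      by (auto simp: grp_center_def)
    thus "cent P x \<noteq> carrier P" by (auto simp: cent_def)
  qed
  obtain z where z: "card (grp_center P) = p ^ z"
    using ppow_card[OF pr fp center_subgroup[OF g]] by blast
  obtain c where c: "card (cent P x) = p ^ c"
    using ppow_card[OF pr fp cent_subgroup[OF g]] x by blast
  have fC: "finite (cent P x)" using CP fP finite_subset by blast
  have "card (grp_center P) < card (cent P x)" using ZC fC psubset_card_mono by blast
  hence zc: "z < c" using z c p1 power_less_imp_less_exp by metis
  have "card (cent P x) < card (carrier P)" using CP fP psubset_card_mono by blast
  hence cn: "c < n" using n c p1 power_less_imp_less_exp unfolding order_def by metis
  have oA: "order A = card (carrier A)" by (simp add: order_def)
  have fZ: "finite (grp_center P)" using ZC fC finite_subset by blast
  have ZsP: "grp_center P \<subseteq> carrier P" by (auto simp: grp_center_def)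
  have cd: "card (carrier P - grp_center P) = p ^ n - p ^ z"
    using card_Diff_subset[OF fZ ZsP] z n by (simp add: order_def)
  have "card (nc_vertices (P \<times>\<times> A)) = (p ^ n - p ^ z) * order A"
    unfolding dp_vertices[OF g A] card_cartesian_product oA cd ..
  moreover have "card {w \<in> nc_vertices (P \<times>\<times> A). nc_adj (P \<times>\<times> A) v w} = (p ^ n - p ^ c) * order A"
    unfolding va dp_adj[OF g A x a] card_cartesian_product oA
    using CP fC c n by (simp add: card_Diff_subset order_def)
  moreover have "card {w \<in> nc_vertices (P \<times>\<times> A). \<not> nc_adj (P \<times>\<times> A) v w} = (p ^ c - p ^ z) * order A"
    unfolding va dp_nonadj[OF g A x a] card_cartesian_product oA
    using card_Diff_subset[OF fZ psubset_imp_subset[OF ZC]] c z by simp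
  ultimately show ?thesis using zc cn n
    by (intro exI[of _ n] exI[of _ z] exI[of _ c]) (simp add: mult.commute)
qed

lemma adj_card:
  assumes f: "bij_betw f (nc_vertices G) (nc_vertices H)"
    and iff: "\<forall>x \<in> nc_vertices G. \<forall>y \<in> nc_vertices G. nc_adj G x y \<longleftrightarrow> nc_adj H (f x) (f y)"
    and v: "v \<in> nc_vertices G"
  shows "card {w \<in> nc_vertices H. nc_adj H (f v) w} = card {w \<in> nc_vertices G. nc_adj G v w}"
    and "card {w \<in> nc_vertices H. \<not> nc_adj H (f v) w} = card {w \<in> nc_vertices G. \<not> nc_adj G v w}"
proof -
  have inj: "inj_on f (nc_vertices G)" and im: "f ` nc_vertices G = nc_vertices H"
    using f by (auto simp: bij_betw_def)
  have "f ` {w \<in> nc_vertices G. nc_adj G v w} = {w \<in> nc_vertices H. nc_adj H (f v) w}"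
  proof
    show "f ` {w \<in> nc_vertices G. nc_adj G v w} \<subseteq> {w \<in> nc_vertices H. nc_adj H (f v) w}"
      using iff v im by auto
    show "{w \<in> nc_vertices H. nc_adj H (f v) w} \<subseteq> f ` {w \<in> nc_vertices G. nc_adj G v w}"
    proof
      fix u assume u: "u \<in> {w \<in> nc_vertices H. nc_adj H (f v) w}"
      then obtain w where w: "w \<in> nc_vertices G" "u = f w" using im by auto
      hence "nc_adj G v w" using u iff v by auto
      thus "u \<in> f ` {w \<in> nc_vertices G. nc_adj G v w}" using w by auto
    qed
  qed
  moreover have "card (f ` {w \<in> nc_vertices G. nc_adj G v w}) = card {w \<in> nc_vertices G. nc_adj G v w}"
    by (rule card_image) (rule inj_on_subset[OF inj], auto)
  ultimately show "card {w \<in> nc_vertices H. nc_adj H (f v) w} = card {w \<in> nc_vertices G. nc_adj G v w}"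
    by simp
  have "f ` {w \<in> nc_vertices G. \<not> nc_adj G v w} = {w \<in> nc_vertices H. \<not> nc_adj H (f v) w}"
  proof
    show "f ` {w \<in> nc_vertices G. \<not> nc_adj G v w} \<subseteq> {w \<in> nc_vertices H. \<not> nc_adj H (f v) w}"
      using iff v im by auto
    show "{w \<in> nc_vertices H. \<not> nc_adj H (f v) w} \<subseteq> f ` {w \<in> nc_vertices G. \<not> nc_adj G v w}"
    proof
      fix u assume u: "u \<in> {w \<in> nc_vertices H. \<not> nc_adj H (f v) w}"
      then obtain w where w: "w \<in> nc_vertices G" "u = f w" using im by auto
      hence "\<not> nc_adj G v w" using u iff v by auto
      thus "u \<in> f ` {w \<in> nc_vertices G. \<not> nc_adj G v w}" using w by auto
    qed
  qed
  moreover have "card (f ` {w \<in> nc_vertices G. \<not> nc_adj G v w}) = card {w \<in> nc_vertices G. \<not> nc_adj G v w}"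
    by (rule card_image) (rule inj_on_subset[OF inj], auto)
  ultimately show "card {w \<in> nc_vertices H. \<not> nc_adj H (f v) w} = card {w \<in> nc_vertices G. \<not> nc_adj G v w}"
    by simp
qed

theorem mainTheorem5:
  fixes p :: nat
    and P :: "'a monoid" and A :: "'b monoid"
    and P1 :: "'c monoid" and B :: "'d monoid"
  assumes "Factorial_Ring.prime p"
    and "finite_p_group p P" and "\<not> comm_group P"
    and "finite_p_group p P1" and "\<not> comm_group P1"
    and "comm_group A" and "finite (carrier A)" and "order A > 1" and "coprime (order A) p"
    and "comm_group B" and "finite (carrier B)" and "order B > 1" and "coprime (order B) p"
    and "nc_irregular (P \<times>\<times> A)" and "nc_irregular (P1 \<times>\<times> B)"
    and "nc_graph_iso (P \<times>\<times> A) (P1 \<times>\<times> B)"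
  shows "order A = order B \<and> order P = order P1 \<and> order (P \<times>\<times> A) = order (P1 \<times>\<times> B)"
proof -
  obtain v where v: "v \<in> nc_vertices (P \<times>\<times> A)" using nonempty_V[OF assms(2,3,6)] by blast
  obtain f where f: "bij_betw f (nc_vertices (P \<times>\<times> A)) (nc_vertices (P1 \<times>\<times> B))"
    and iff: "\<forall>x \<in> nc_vertices (P \<times>\<times> A). \<forall>y \<in> nc_vertices (P \<times>\<times> A).
       nc_adj (P \<times>\<times> A) x y \<longleftrightarrow> nc_adj (P1 \<times>\<times> B) (f x) (f y)"
    using assms(16) by (auto simp: nc_graph_iso_def)
  have fv: "f v \<in> nc_vertices (P1 \<times>\<times> B)" using f v by (auto simp: bij_betw_def)
  have cV: "card (nc_vertices (P \<times>\<times> A)) = card (nc_vertices (P1 \<times>\<times> B))"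
    using f by (rule bij_betw_same_card)
  note c1 = adj_card[OF f iff v]
  obtain n z c where I: "z < c" "c < n" "order P = p ^ n"
    "card (nc_vertices (P \<times>\<times> A)) = order A * (p ^ n - p ^ z)"
    "card {w \<in> nc_vertices (P \<times>\<times> A). nc_adj (P \<times>\<times> A) v w} = order A * (p ^ n - p ^ c)"
    "card {w \<in> nc_vertices (P \<times>\<times> A). \<not> nc_adj (P \<times>\<times> A) v w} = order A * (p ^ c - p ^ z)"
    using invariants[OF assms(1,2,6,7) v] by blast
  obtain n' z' c' where J: "z' < c'" "c' < n'" "order P1 = p ^ n'"
    "card (nc_vertices (P1 \<times>\<times> B)) = order B * (p ^ n' - p ^ z')"
    "card {w \<in> nc_vertices (P1 \<times>\<times> B). nc_adj (P1 \<times>\<times> B) (f v) w} = order B * (p ^ n' - p ^ c')"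
    "card {w \<in> nc_vertices (P1 \<times>\<times> B). \<not> nc_adj (P1 \<times>\<times> B) (f v) w} = order B * (p ^ c' - p ^ z')"
    using invariants[OF assms(1,4,10,11) fv] by blast
  have e1: "order A * (p ^ n - p ^ z) = order B * (p ^ n' - p ^ z')"
    using I(4) J(4) cV by argo
  have e2: "order A * (p ^ n - p ^ c) = order B * (p ^ n' - p ^ c')"
    using I(5) J(5) c1(1) by argo
  have e3: "order A * (p ^ c - p ^ z) = order B * (p ^ c' - p ^ z')"
    using I(6) J(6) c1(2) by argo
  have "order A = order B \<and> n = n'"
    by (rule arith[OF assms(1,9,13) I(1,2) J(1,2) e1 e2 e3])
  moreover have "order (P \<times>\<times> A) = order P * order A" "order (P1 \<times>\<times> B) = order P1 * order B"
    by (simp_all add: order_def card_cartesian_product)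
  ultimately show ?thesis using I(3) J(3) by simp
qed

end
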